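(* There is an absolute constant $c$ such that for every graph $G$ with $V(G)=[n]$ and every $k\ge1$, with $H=G^k$ and $(P,N)=R[H]$ as defined below, there is a CNF formula consistent with $(P,N)$ with at most $\chi(G)^k n^{c}$ clauses.
   Context: $G^k$ is the $k$-fold lexicographic product; its vertices are tuples $\vec u=(u_1,\dots,u_k)\in V(G)^k$, and $\vec u\vec v\in E(G^k)$ iff there is $i$ with $u_j=v_j$ for $j<i$ and $u_iv_i\in E(G)$. For $u\in[n]$ let $\mathrm{enc}(u)=0^{u-1}10^{n-u}\in\{0,1\}^n$, and for an edge $uv$ let $\mathrm{enc}(uv)\in\{0,1\}^n$ have 1s exactly at positions $u$ and $v$. Samples lie in $\{0,1\}^{nk}$ (variables $z(i,u)$, $i\in[k]$, $u\in[n]$, in $k$ blocks). Negative samples: $N=\{\mathrm{enc}(u_1)\cdots\mathrm{enc}(u_k):\vec u\in V(H)\}$. Positive samples: $P=\{\mathrm{enc}(u_1)\cdots\mathrm{enc}(u_{i-1})\,\mathrm{enc}(u_iv)\,\mathrm{enc}(u_{i+1})\cdots\mathrm{enc}(u_k):\vec u\in V(H),\ i\in[k],\ u_iv\in E(G)\}$. A formula is consistent if it is true on all of $P$ and false on all of $N$. $\chi$ is the chromatic number. *)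

theory Defs
  imports Complex_Main
begin

definition graph_on :: "nat \<Rightarrow> (nat \<Rightarrow> nat \<Rightarrow> bool) \<Rightarrow> bool" where
  "graph_on n E \<longleftrightarrow> (\<forall>u v. E u v \<longrightarrow> u \<in> {1..n} \<and> v \<in> {1..n} \<and> u \<noteq> v \<and> E v u)"

definition proper_colouring :: "nat \<Rightarrow> (nat \<Rightarrow> nat \<Rightarrow> bool) \<Rightarrow> nat \<Rightarrow> (nat \<Rightarrow> nat) \<Rightarrow> bool" where
  "proper_colouring n E c f \<longleftrightarrow>
     (\<forall>u\<in>{1..n}. f u < c) \<and> (\<forall>u v. E u v \<longrightarrow> f u \<noteq> f v)"

definition chromatic_number :: "nat \<Rightarrow> (nat \<Rightarrow> nat \<Rightarrow> bool) \<Rightarrow> nat" where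
  "chromatic_number n E = (LEAST c. \<exists>f. proper_colouring n E c f)"

text \<open>Vertices of H = G^k: tuples (u_1,...,u_k) in [n]^k, as functions on {1..k}
  (values outside {1..k} fixed to 0 for uniqueness).\<close>
definition tuples :: "nat \<Rightarrow> nat \<Rightarrow> (nat \<Rightarrow> nat) set" where
  "tuples n k = {us. (\<forall>i\<in>{1..k}. us i \<in> {1..n}) \<and> (\<forall>i. i \<notin> {1..k} \<longrightarrow> us i = 0)}"

text \<open>Lexicographic power edges (for reference; the samples only use V(H)).\<close>
definition lex_edge :: "nat \<Rightarrow> (nat \<Rightarrow> nat \<Rightarrow> bool) \<Rightarrow> (nat \<Rightarrow> nat) \<Rightarrow> (nat \<Rightarrow> nat) \<Rightarrow> bool" where
  "lex_edge k E us vs \<longleftrightarrow> (\<exists>i\<in>{1..k}. (\<forall>j\<in>{1..<i}. us j = vs j) \<and> E (us i) (vs i))"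

text \<open>Samples in {0,1}^{nk}: assignments to variables z(i,u), i in [k], u in [n];
  represented as functions on pairs (i,u), False outside [k] x [n].\<close>
type_synonym sample = "nat \<times> nat \<Rightarrow> bool"

definition enc_tuple :: "nat \<Rightarrow> nat \<Rightarrow> (nat \<Rightarrow> nat) \<Rightarrow> sample" where
  "enc_tuple n k us = (\<lambda>(i, w). i \<in> {1..k} \<and> w \<in> {1..n} \<and> w = us i)"

definition neg_samples :: "nat \<Rightarrow> nat \<Rightarrow> sample set" where
  "neg_samples n k = enc_tuple n k ` tuples n k"

definition pos_samples :: "nat \<Rightarrow> (nat \<Rightarrow> nat \<Rightarrow> bool) \<Rightarrow> nat \<Rightarrow> sample set" where
  "pos_samples n E k = {x. \<exists>us\<in>tuples n k. \<exists>j\<in>{1..k}. \<exists>v. E (us j) v \<and>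
      x = (\<lambda>(i, w). i \<in> {1..k} \<and> w \<in> {1..n} \<and> (w = us i \<or> (i = j \<and> w = v)))}"

type_synonym literal = "(nat \<times> nat) \<times> bool"
type_synonym cnf = "literal set list"

definition cnf_eval :: "cnf \<Rightarrow> sample \<Rightarrow> bool" where
  "cnf_eval F x \<longleftrightarrow> (\<forall>C\<in>set F. \<exists>(z, b)\<in>C. x z = b)"

definition cnf_over :: "nat \<Rightarrow> nat \<Rightarrow> cnf \<Rightarrow> bool" where
  "cnf_over n k F \<longleftrightarrow> (\<forall>C\<in>set F. finite C \<and> (\<forall>((i, w), b)\<in>C. i \<in> {1..k} \<and> w \<in> {1..n}))"

definition consistent :: "cnf \<Rightarrow> sample set \<Rightarrow> sample set \<Rightarrow> bool" where
  "consistent F P N \<longleftrightarrow> (\<forall>x\<in>P. cnf_eval F x) \<and> (\<forall>x\<in>N. \<not> cnf_eval F x)"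

end

theory Submission
  imports Defs
begin

definition clause_of :: "nat \<Rightarrow> nat \<Rightarrow> (nat \<Rightarrow> nat) \<Rightarrow> nat list \<Rightarrow> literal set" where
  "clause_of n k f cs = {((i, w), True) | i w. i \<in> {1..k} \<and> w \<in> {1..n} \<and> f w \<noteq> cs ! (i - 1)}"

lemma chrom_exists:
  assumes "graph_on n E"
  shows "\<exists>f. proper_colouring n E (chromatic_number n E) f"
proof -
  have "proper_colouring n E n (\<lambda>u. u - 1)"
    using assms unfolding proper_colouring_def graph_on_def by fastforce
  then have "\<exists>c f. proper_colouring n E c f" by blast
  then show ?thesis unfolding chromatic_number_def by (rule LeastI_ex)
qed

theorem mainTheorem17:
  "\<exists>c::real. \<forall>n k (E :: nat \<Rightarrow> nat \<Rightarrow> bool). graph_on n E \<and> k \<ge> 1 \<longrightarrow>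
     (\<exists>F :: cnf. cnf_over n k F \<and> consistent F (pos_samples n E k) (neg_samples n k) \<and>
        real (length F) \<le> real (chromatic_number n E) ^ k * real n powr c)"
proof (intro exI[of _ 0] allI impI)
  fix n k E assume H: "graph_on n E \<and> (k::nat) \<ge> 1"
  show "\<exists>F :: cnf. cnf_over n k F \<and> consistent F (pos_samples n E k) (neg_samples n k) \<and>
        real (length F) \<le> real (chromatic_number n E) ^ k * real n powr 0"
  proof (cases "n = 0")
    case True
    have "tuples n k = {}" using H True unfolding tuples_def by force
    then have "pos_samples n E k = {}" "neg_samples n k = {}"
      unfolding pos_samples_def neg_samples_def by auto
    then show ?thesis
      by (intro exI[of _ "[]"]) (simp add: cnf_over_def consistent_def)
  next
    case False
    define \<chi> where "\<chi> = chromatic_number n E"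
    obtain f where f: "proper_colouring n E \<chi> f" using chrom_exists H \<chi>_def by blast
    define F where "F = map (clause_of n k f) (List.n_lists k [0..<\<chi>])"
    have len: "length F = \<chi> ^ k" by (simp add: F_def length_n_lists)
    have over: "cnf_over n k F"
    proof -
      have "clause_of n k f cs \<subseteq> ({1..k} \<times> {1..n}) \<times> {True}" for cs
        unfolding clause_of_def by auto
      then have "finite (clause_of n k f cs)" for cs by (meson finite_SigmaI finite_atLeastAtMost finite_insert finite.emptyI rev_finite_subset)
      then show ?thesis unfolding cnf_over_def F_def clause_of_def by auto
    qed
    have pos: "cnf_eval F x" if xP: "x \<in> pos_samples n E k" for x
    proof -
      obtain us j v where us: "us \<in> tuples n k" and j: "j \<in> {1..k}" and e: "E (us j) v"
        and x: "x = (\<lambda>(i, w). i \<in> {1..k} \<and> w \<in> {1..n} \<and> (w = us i \<or> (i = j \<and> w = v)))"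
        using xP unfolding pos_samples_def by blast
      have ne: "f (us j) \<noteq> f v" using f e unfolding proper_colouring_def by blast
      have uj: "us j \<in> {1..n}" using us j unfolding tuples_def by blast
      have v: "v \<in> {1..n}" using H e unfolding graph_on_def by blast
      show ?thesis unfolding cnf_eval_def
      proof
        fix C assume "C \<in> set F"
        then obtain cs where C: "C = clause_of n k f cs" unfolding F_def by auto
        show "\<exists>(z, b)\<in>C. x z = b"
        proof (cases "f (us j) = cs ! (j - 1)")
          case True
          then have "((j, v), True) \<in> C" using ne j v unfolding C clause_of_def by auto
          moreover have "x (j, v) = True" using x j v by simp
          ultimately show ?thesis by blast
        next
          case False
          then have "((j, us j), True) \<in> C" using j uj unfolding C clause_of_def by auto
          moreover have "x (j, us j) = True" using x j uj by simp
          ultimately show ?thesis by blast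
        qed
      qed
    qed
    have neg: "\<not> cnf_eval F x" if xN: "x \<in> neg_samples n k" for x
    proof -
      obtain us where us: "us \<in> tuples n k" and x: "x = enc_tuple n k us"
        using xN unfolding neg_samples_def by blast
      define cs where "cs = map (\<lambda>i. f (us (i + 1))) [0..<k]"
      have "\<forall>i\<in>{1..k}. us i \<in> {1..n}" using us unfolding tuples_def by blast
      then have "set cs \<subseteq> set [0..<\<chi>]"
        using f unfolding cs_def proper_colouring_def by auto
      then have "cs \<in> set (List.n_lists k [0..<\<chi>])"
        by (simp add: set_n_lists cs_def)
      then have inF: "clause_of n k f cs \<in> set F" unfolding F_def by auto
      have "\<not> (\<exists>(z, b)\<in>clause_of n k f cs. x z = b)"
      proof
        assume "\<exists>(z, b)\<in>clause_of n k f cs. x z = b"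
        then obtain i w where iw: "i \<in> {1..k}" "w \<in> {1..n}" "f w \<noteq> cs ! (i - 1)" "x (i, w)"
          unfolding clause_of_def by auto
        then have "w = us i" using x unfolding enc_tuple_def by auto
        moreover have "cs ! (i - 1) = f (us i)" using iw(1) unfolding cs_def by auto
        ultimately show False using iw(3) by simp
      qed
      then show ?thesis using inF unfolding cnf_eval_def by blast
    qed
    show ?thesis
      by (intro exI[of _ F]) (use over pos neg len False in \<open>auto simp: consistent_def \<chi>_def\<close>)
  qed
qed

end
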